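(* Let $a>0$, $B_u>0$, $B_v\neq0$, $\Delta x\in(0,1]$, $\varepsilon>0$, let $(\alpha,\beta)$ be a SAT-parameter (defined in the context), and assume $2aB_v+\tfrac{\Delta x}{\varepsilon}B_u>0$. Consider the inequality $$\sqrt{2a|B_v\alpha|}<\sqrt{-\bigl(2aB_v+\tfrac{\Delta x}{\varepsilon}B_u\bigr)\alpha}.\qquad(\ast)$$ (a) If $B_v>0$, then $(\ast)$ holds (for all such $\Delta x,\varepsilon$). (b) If $B_v<0$, then for any $\delta_0>-4aB_u^{-1}B_v$, $(\ast)$ holds whenever $\Delta x\geq\delta_0\varepsilon$.
   Context: SAT-parameter: given $a>0$, $B_u>0$, $B_v\neq 0$, a pair $(\alpha,\beta)\in\mathbb{R}^2$ is a SAT-parameter if $\alpha<(3+2\sqrt2)\min(B_v^{-1},0)$ and $-a(1-B_v\alpha)-2a\sqrt{|B_v\alpha|}<\beta B_u<-a(1-B_v\alpha)+2a\sqrt{|B_v\alpha|}$. *)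

theory Defs
  imports Complex_Main
begin

definition sat_param :: "real \<Rightarrow> real \<Rightarrow> real \<Rightarrow> real \<Rightarrow> real \<Rightarrow> bool" where
  "sat_param a Bu Bv \<alpha> \<beta> \<longleftrightarrow>
     \<alpha> < (3 + 2 * sqrt 2) * min (inverse Bv) 0 \<and>
     - a * (1 - Bv * \<alpha>) - 2 * a * sqrt \<bar>Bv * \<alpha>\<bar> < \<beta> * Bu \<and>
     \<beta> * Bu < - a * (1 - Bv * \<alpha>) + 2 * a * sqrt \<bar>Bv * \<alpha>\<bar>"

end

theory Submission
  imports Defs
begin

theorem lemma3:
  fixes a Bu Bv dx \<epsilon> \<alpha> \<beta> :: real
  assumes "a > 0" and "Bu > 0" and "Bv \<noteq> 0"
    and "0 < dx" and "dx \<le> 1" and "\<epsilon> > 0"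
    and "sat_param a Bu Bv \<alpha> \<beta>"
    and "2 * a * Bv + (dx / \<epsilon>) * Bu > 0"
  shows "(Bv > 0 \<longrightarrow>
            sqrt (2 * a * \<bar>Bv * \<alpha>\<bar>) < sqrt (- (2 * a * Bv + (dx / \<epsilon>) * Bu) * \<alpha>))
       \<and> (Bv < 0 \<longrightarrow> (\<forall>\<delta>0::real. \<delta>0 > - 4 * a * inverse Bu * Bv \<longrightarrow> dx \<ge> \<delta>0 * \<epsilon> \<longrightarrow>
            sqrt (2 * a * \<bar>Bv * \<alpha>\<bar>) < sqrt (- (2 * a * Bv + (dx / \<epsilon>) * Bu) * \<alpha>)))"
proof -
  have al: "\<alpha> < (3 + 2 * sqrt 2) * min (inverse Bv) 0"
    using assms(7) unfolding sat_param_def by blast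
  have "min (inverse Bv) 0 \<le> 0" by simp
  moreover have "(3 + 2 * sqrt 2) > (0::real)" by (simp add: add_pos_nonneg)
  ultimately have "(3 + 2 * sqrt 2) * min (inverse Bv) 0 \<le> 0"
    by (simp add: mult_nonneg_nonpos)
  with al have aneg: "\<alpha> < 0" by linarith
  have key: "2 * a * \<bar>Bv\<bar> < 2 * a * Bv + (dx / \<epsilon>) * Bu \<Longrightarrow>
      sqrt (2 * a * \<bar>Bv * \<alpha>\<bar>) < sqrt (- (2 * a * Bv + (dx / \<epsilon>) * Bu) * \<alpha>)"
  proof -
    assume h: "2 * a * \<bar>Bv\<bar> < 2 * a * Bv + (dx / \<epsilon>) * Bu"
    have "2 * a * \<bar>Bv\<bar> * (-\<alpha>) < (2 * a * Bv + (dx / \<epsilon>) * Bu) * (-\<alpha>)"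
      using h aneg by (intro mult_strict_right_mono) auto
    then have "2 * a * \<bar>Bv * \<alpha>\<bar> < - (2 * a * Bv + (dx / \<epsilon>) * Bu) * \<alpha>"
      using aneg by (simp add: abs_mult algebra_simps)
    then show ?thesis by simp
  qed
  have p: "dx / \<epsilon> * Bu > 0" using assms by simp
  show ?thesis
  proof (intro conjI impI allI)
    assume "Bv > 0" then show "sqrt (2 * a * \<bar>Bv * \<alpha>\<bar>) < sqrt (- (2 * a * Bv + (dx / \<epsilon>) * Bu) * \<alpha>)"
      using key p by simp
  next
    fix d :: real
    assume b: "Bv < 0" and d: "d > - 4 * a * inverse Bu * Bv" and e: "dx \<ge> d * \<epsilon>"
    have "d \<le> dx / \<epsilon>" using e assms(6) by (simp add: le_divide_eq)
    then have "d * Bu \<le> dx / \<epsilon> * Bu" using assms(2) by (intro mult_right_mono) auto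
    moreover have "- 4 * a * inverse Bu * Bv * Bu < d * Bu" using d assms(2) by (intro mult_strict_right_mono) auto
    moreover have "- 4 * a * inverse Bu * Bv * Bu = - 4 * a * Bv" using assms(2) by (simp add: field_simps)
    ultimately have "- 4 * a * Bv < dx / \<epsilon> * Bu" by linarith
    then show "sqrt (2 * a * \<bar>Bv * \<alpha>\<bar>) < sqrt (- (2 * a * Bv + (dx / \<epsilon>) * Bu) * \<alpha>)"
      using b by (intro key) (simp add: abs_of_neg algebra_simps)
  qed
qed

end
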